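(* Fix $2\le d\le7$, let $(a,b,c)$ be given by: $d=2$: $(0.5,0.7,0.27)$; $d=3$: $(0.4,0.6,0.2)$; $d=4$: $(0.3,0.5,0.1)$; $d=5$: $(0.3,0.4,0.1)$; $d=6$: $(0.27,0.32,0.1)$; $d=7$: $(0.26,0.27,0.01)$, and let $x\in\mathcal{S}_{a,b,c}$. Then for every $n\ge2$ (partial derivatives evaluated at $x$): $\left|\frac{\partial\psi_n}{\partial x_{n-1}}\right|\le\frac{4d(d-1)^{d-1}(1+c+c^2)^d}{(d+1)^{d+1}(1+c)^{d-1}}$ for $d=2$; $\left|\frac{\partial\psi_n}{\partial x_{n-1}}\right|\le\frac{db^{d-1}(1+c+c^2)^d}{(1+b)(1+b+bc)^{d}}$ for $3\le d\le7$; $\left|\frac{\partial\psi_n}{\partial x_{n}}\right|\le\left|\frac{\partial\psi_n}{\partial x_{n-1}}\right|\cdot b(1+c+bc)$; $\left|\frac{\partial\psi_n}{\partial x_{n+1}}\right|\le\frac{db^dc(1+c+c^2)^{d-1}}{(1+b+bc)^d}$.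
   Context: For $n\ge2$, $\psi_n(x)=x_{n-1}^d\big(\frac{1+x_n+x_nx_{n+1}}{1+x_{n-1}+x_{n-1}x_n}\big)^d$. $\mathcal{R}$ is the set of sequences $(x_i)_{i\ge1}$ with $x_i=z_i/z_{i-1}$ ($x_i=0$ if $z_{i-1}=0$) for $z$ a symmetric probability distribution on $\mathbb{Z}$ whose support is an interval or all of $\mathbb{Z}$, and $\mathcal{S}_{a,b,c}:=\{x\in\mathcal{R}: a\le x_1\le b,\ 0\le x_n\le c\ \forall n\ge2\}$. *)

theory Defs
  imports "HOL-Analysis.Analysis"
begin

text \<open>psi_n as a function of (x_{n-1}, x_n, x_{n+1}).\<close>
definition psi :: "nat \<Rightarrow> real \<Rightarrow> real \<Rightarrow> real \<Rightarrow> real" where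
  "psi d u v w = u ^ d * ((1 + v + v * w) / (1 + u + u * v)) ^ d"

definition sym_prob_interval :: "(int \<Rightarrow> real) \<Rightarrow> bool" where
  "sym_prob_interval z \<longleftrightarrow>
     (\<forall>i. z i \<ge> 0) \<and> (\<forall>i. z (-i) = z i) \<and> (z has_sum 1) UNIV \<and>
     (\<forall>i j k. i \<le> j \<and> j \<le> k \<and> z i \<noteq> 0 \<and> z k \<noteq> 0 \<longrightarrow> z j \<noteq> 0)"

text \<open>The set R; sequences are indexed from 1 (the value at 0 is irrelevant).\<close>
definition RR :: "(nat \<Rightarrow> real) set" where
  "RR = {x. \<exists>z. sym_prob_interval z \<and>
        (\<forall>i\<ge>1. x i = (if z (int i - 1) = 0 then 0 else z (int i) / z (int i - 1)))}"

definition SS :: "real \<Rightarrow> real \<Rightarrow> real \<Rightarrow> (nat \<Rightarrow> real) set" where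
  "SS a b c = {x \<in> RR. a \<le> x 1 \<and> x 1 \<le> b \<and> (\<forall>n\<ge>2. 0 \<le> x n \<and> x n \<le> c)}"

definition params :: "nat \<Rightarrow> real \<times> real \<times> real" where
  "params d = (if d = 2 then (0.5, 0.7, 0.27)
     else if d = 3 then (0.4, 0.6, 0.2)
     else if d = 4 then (0.3, 0.5, 0.1)
     else if d = 5 then (0.3, 0.4, 0.1)
     else if d = 6 then (0.27, 0.32, 0.1)
     else (0.26, 0.27, 0.01))"

end

theory Submission
  imports Defs
begin

lemma alg_u:
  fixes u v N D :: real
  assumes D: "u + u * v = D - 1" "D \<noteq> 0"
  shows "real (Suc m) * (1 * u ^ (Suc m - Suc 0)) * (N / D) ^ Suc m +
    real (Suc m) * ((0 * D - N * (0 + 1 + (1 * v + 0 * u))) / (D * D) * (N / D) ^ (Suc m - Suc 0)) * u ^ Suc m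
   = real (Suc m) * u ^ m * N ^ Suc m / D ^ Suc (Suc m)"
proof -
  have "N / D - N * (1 + v) / (D * D) * u = N / (D * D)"
  proof -
    have "N * (1 + v) * u = N * (u + u * v)" by (simp add: algebra_simps)
    also have "\<dots> = N * (D - 1)" by (simp only: D(1))
    finally have e: "N * (1 + v) * u = N * (D - 1)" .
    have "N * (1 + v) / (D * D) * u = (N * (1 + v) * u) / (D * D)" by simp
    also have "\<dots> = N * (D - 1) / (D * D)" by (simp only: e)
    finally have "N * (1 + v) / (D * D) * u = N * (D - 1) / (D * D)" .
    moreover have "N / D - N * (D - 1) / (D * D) = N / (D * D)" using D(2) by (simp add: field_simps)
    ultimately show ?thesis by (simp only:)
  qed
  note key = this
  have L: "real (Suc m) * (1 * u ^ (Suc m - Suc 0)) * (N / D) ^ Suc m +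
    real (Suc m) * ((0 * D - N * (0 + 1 + (1 * v + 0 * u))) / (D * D) * (N / D) ^ (Suc m - Suc 0)) * u ^ Suc m
    = real (Suc m) * u ^ m * (N/D)^m * (N / D - N * (1 + v) / (D * D) * u)"
    by (simp add: power_Suc divide_inverse algebra_simps)
  also have "\<dots> = real (Suc m) * u ^ m * (N/D)^m * (N / (D * D))" by (simp only: key)
  finally have L: "real (Suc m) * (1 * u ^ (Suc m - Suc 0)) * (N / D) ^ Suc m +
    real (Suc m) * ((0 * D - N * (0 + 1 + (1 * v + 0 * u))) / (D * D) * (N / D) ^ (Suc m - Suc 0)) * u ^ Suc m
    = real (Suc m) * u ^ m * (N/D)^m * (N / (D * D))" .
  show ?thesis unfolding L using D(2) by (simp add: power_divide power_Suc mult_ac)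
qed

lemma alg2:
  fixes u N D X c :: real
  assumes "D \<noteq> 0" "X = c"
  shows "0 * (N / D) ^ Suc m + real (Suc m) * (X / (D * D) * (N / D) ^ (Suc m - Suc 0)) * u ^ Suc m
    = real (Suc m) * u ^ Suc m * N ^ m * c / D ^ Suc (Suc m)"
  using assms by (simp add: power_divide field_simps)

lemma alg3:
  fixes u N D X v :: real
  assumes "D \<noteq> 0" "X = v * D"
  shows "0 * (N / D) ^ Suc m + real (Suc m) * (X / (D * D) * (N / D) ^ (Suc m - Suc 0)) * u ^ Suc m
    = real (Suc m) * u ^ Suc m * N ^ m * v / D ^ Suc m"
  using assms by (simp add: power_divide field_simps)

lemma du:
  fixes u v w :: real
  assumes "u \<ge> 0" "v \<ge> 0"
  shows "((\<lambda>t. psi (Suc m) t v w) has_real_derivative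
     (real (Suc m) * u ^ m * (1 + v + v * w) ^ Suc m / (1 + u + u * v) ^ Suc (Suc m))) (at u)"
proof -
  have D: "1 + u + u * v > 0" using assms by (smt (verit) mult_nonneg_nonneg)
  show ?thesis
    unfolding psi_def
    apply (rule derivative_eq_intros refl)+
    using D apply simp
    apply (rule refl)
    apply (rule refl)
    apply (rule alg_u) using D by auto
qed

lemma dv:
  fixes u v w :: real
  assumes "u \<ge> 0" "v \<ge> 0"
  shows "((\<lambda>t. psi (Suc m) u t w) has_real_derivative
     (real (Suc m) * u ^ Suc m * (1 + v + v * w) ^ m * (1 + w + u * w) / (1 + u + u * v) ^ Suc (Suc m))) (at v)"
proof -
  have D: "1 + u + u * v > 0" using assms by (smt (verit) mult_nonneg_nonneg)
  show ?thesis
    unfolding psi_def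
    apply (rule derivative_eq_intros refl)+
    using D apply simp
    apply (rule refl)
    apply (rule refl)
    apply (rule alg2) using D by (auto simp: algebra_simps)
qed

lemma dw:
  fixes u v w :: real
  assumes "u \<ge> 0" "v \<ge> 0"
  shows "((\<lambda>t. psi (Suc m) u v t) has_real_derivative
     (real (Suc m) * u ^ Suc m * (1 + v + v * w) ^ m * v / (1 + u + u * v) ^ Suc m)) (at w)"
proof -
  have D: "1 + u + u * v > 0" using assms by (smt (verit) mult_nonneg_nonneg)
  show ?thesis
    unfolding psi_def
    apply (rule derivative_eq_intros refl)+
    using D apply simp
    apply (rule refl)
    apply (rule refl)
    apply (rule alg3) using D by (auto simp: algebra_simps)
qed


lemma Dv_le:
  fixes u v w b c :: real
  assumes "0 \<le> u" "u \<le> b" "0 \<le> v" "0 \<le> w" "w \<le> c"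
  shows "\<bar>real (Suc m) * u ^ Suc m * (1 + v + v * w) ^ m * (1 + w + u * w) / (1 + u + u * v) ^ Suc (Suc m)\<bar>
     \<le> \<bar>real (Suc m) * u ^ m * (1 + v + v * w) ^ Suc m / (1 + u + u * v) ^ Suc (Suc m)\<bar> * (b * (1 + c + b * c))"
proof -
  define N where "N = 1 + v + v * w"
  define D where "D = 1 + u + u * v"
  have N: "N \<ge> 1" unfolding N_def using assms by (simp add: mult_nonneg_nonneg)
  have D: "D > 0" unfolding D_def using assms by (smt (verit) mult_nonneg_nonneg)
  define Du where "Du = real (Suc m) * u ^ m * N ^ Suc m / D ^ Suc (Suc m)"
  have N0: "N \<noteq> 0" using N by simp
  have Du: "Du \<ge> 0" unfolding Du_def using N D assms by simp
  have eq: "real (Suc m) * u ^ Suc m * N ^ m * (1 + w + u * w) / D ^ Suc (Suc m) = Du * (u * (1 + w + u * w) / N)"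
    unfolding Du_def using N0 D by (simp add: field_simps power_Suc)
  have X: "u * (1 + w + u * w) \<ge> 0" using assms by (simp add: mult_nonneg_nonneg)
  have r0: "u * (1 + w + u * w) / N \<ge> 0" using X N by simp
  have r: "u * (1 + w + u * w) / N \<le> b * (1 + c + b * c)"
  proof -
    have "u * (1 + w + u * w) / N \<le> u * (1 + w + u * w) / 1"
      using N X by (intro divide_left_mono) auto
    also have "\<dots> \<le> b * (1 + c + b * c)"
    proof -
      have "u * w \<le> b * c" using assms by (intro mult_mono) auto
      then have "1 + w + u * w \<le> 1 + c + b * c" using assms by simp
      then show ?thesis using assms X by (simp add: mult_mono)
    qed
    finally show ?thesis .
  qed
  have "Du * (u * (1 + w + u * w) / N) \<le> Du * (b * (1 + c + b * c))"
    by (rule mult_left_mono[OF r Du])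
  moreover have "Du * (u * (1 + w + u * w) / N) \<ge> 0" using Du r0 by (rule mult_nonneg_nonneg)
  ultimately show ?thesis
    using eq Du unfolding N_def[symmetric] D_def[symmetric] Du_def[symmetric]
    by (metis abs_of_nonneg)
qed


lemma Dw_le:
  fixes u v w b c :: real
  assumes "0 \<le> u" "u \<le> b" "0 \<le> v" "v \<le> c" "0 \<le> w" "w \<le> c"
  shows "\<bar>real (Suc m) * u ^ Suc m * (1 + v + v * w) ^ m * v / (1 + u + u * v) ^ Suc m\<bar>
     \<le> real (Suc m) * b ^ Suc m * c * (1 + c + c^2) ^ m / (1 + b + b * c) ^ Suc m"
proof -
  define N where "N = 1 + v + v * w"
  define D where "D = 1 + u + u * v"
  define E where "E = 1 + b + b * c"
  define C where "C = 1 + c + c^2"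
  have N: "N \<ge> 1" unfolding N_def using assms by (simp add: mult_nonneg_nonneg)
  have D: "D > 0" unfolding D_def using assms by (smt (verit) mult_nonneg_nonneg)
  have E: "E > 0" unfolding E_def using assms by (smt (verit) mult_nonneg_nonneg)
  have eq: "real (Suc m) * u ^ Suc m * N ^ m * v / D ^ Suc m = real (Suc m) * (u * v / D) * (u * N / D) ^ m"
    using D by (simp add: field_simps power_Suc)
  have r1: "u * v / D \<le> b * c / E"
  proof -
    have h1: "u * v \<le> b * c" using assms by (intro mult_mono) auto
    have h2: "u * b * (c - v) \<ge> 0" using assms by (simp add: mult_nonneg_nonneg)
    have "u * v * E \<le> b * c * D" unfolding E_def D_def using h1 h2
      by (simp add: algebra_simps)
    then show ?thesis using D E by (simp add: field_simps)
  qed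
  have r2: "u * N / D \<le> b * C / E"
  proof -
    define M where "M = 1 + v + v * c"
    define F where "F = 1 + b + b * v"
    have F: "F > 0" unfolding F_def using assms by (smt (verit) mult_nonneg_nonneg)
    have NM: "N \<le> M" unfolding N_def M_def using assms by (simp add: mult_left_mono)
    have M: "M \<ge> 0" unfolding M_def using assms by (simp add: mult_nonneg_nonneg)
    have "u * N / D \<le> u * M / D" using NM D assms by (simp add: divide_right_mono mult_left_mono)
    also have "\<dots> \<le> b * M / F"
    proof -
      have "u * M * F \<le> b * M * D"
      proof -
        have "u * M * F - b * M * D = M * (u - b)" unfolding F_def D_def by (simp add: algebra_simps)
        moreover have "M * (u - b) \<le> 0" using M assms by (simp add: mult_nonneg_nonpos)
        ultimately show ?thesis by simp
      qed
      then show ?thesis using D F by (simp add: field_simps)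
    qed
    also have "\<dots> \<le> b * C / E"
    proof -
      have "M * E \<le> C * F"
      proof -
        have "C * F - M * E = (c - v) * (1 + c + c * b)" unfolding F_def C_def M_def E_def
          by (simp add: algebra_simps power2_eq_square)
        moreover have "(c - v) * (1 + c + c * b) \<ge> 0" using assms by (simp add: mult_nonneg_nonneg)
        ultimately show ?thesis by simp
      qed
      then have "b * M * E \<le> b * C * F" using assms by (simp add: mult_left_mono mult.assoc)
      then show ?thesis using E F by (simp add: field_simps)
    qed
    finally show ?thesis .
  qed
  have p1: "u * v / D \<ge> 0" "u * N / D \<ge> 0" using assms D N by auto
  have "(u * N / D) ^ m \<le> (b * C / E) ^ m" using r2 p1(2) by (rule power_mono)
  then have "(u * v / D) * (u * N / D) ^ m \<le> (b * c / E) * (b * C / E) ^ m"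
    using r1 p1 by (intro mult_mono) (auto intro: order_trans)
  then have "real (Suc m) * (u * v / D) * (u * N / D) ^ m \<le> real (Suc m) * (b * c / E) * (b * C / E) ^ m"
    by (simp only: mult.assoc mult_left_mono of_nat_0_le_iff)
  also have "\<dots> = real (Suc m) * b ^ Suc m * c * C ^ m / E ^ Suc m"
    using E by (simp add: field_simps power_Suc)
  finally have fin: "real (Suc m) * u ^ Suc m * N ^ m * v / D ^ Suc m \<le> real (Suc m) * b ^ Suc m * c * C ^ m / E ^ Suc m"
    using eq by simp
  have "real (Suc m) * u ^ Suc m * N ^ m * v / D ^ Suc m \<ge> 0" using assms D N by simp
  then show ?thesis
    using fin unfolding N_def[symmetric] D_def[symmetric] E_def[symmetric] C_def[symmetric]
    by (metis abs_of_nonneg)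
qed



definition qq :: "nat \<Rightarrow> real \<Rightarrow> real \<Rightarrow> real" where
  "qq j k t = (real j + 1) * (1 + t) * (1 + k * t) - t * (1 + k * t) - (real j + 2) * k * t * (1 + t)"

lemma qq_nonneg:
  assumes "0 \<le> t" "t \<le> b" "0 < b" "0 \<le> k" "qq j k b \<ge> 0"
  shows "qq j k t \<ge> 0"
proof -
  have "b * qq j k t = t * qq j k b + (b - t) * (real j + 1) + 2 * k * t * b * (b - t)"
    unfolding qq_def by (simp add: algebra_simps)
  moreover have "t * qq j k b \<ge> 0" using assms by simp
  moreover have "(b - t) * (real j + 1) \<ge> 0" using assms by simp
  moreover have "2 * k * t * b * (b - t) \<ge> 0" using assms by simp
  ultimately have "b * qq j k t \<ge> 0" by linarith
  then show ?thesis using assms by (simp add: zero_le_mult_iff)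
qed

lemma g_deriv:
  fixes k t :: real
  assumes "0 \<le> t" "0 \<le> k"
  shows "((\<lambda>t. t ^ Suc j / ((1 + t) * (1 + k * t) ^ Suc (Suc j))) has_real_derivative
     (t ^ j * (1 + k * t) ^ Suc j * qq j k t / ((1 + t) * (1 + k * t) ^ Suc (Suc j))^2)) (at t)"
proof -
  have p: "1 + k * t > 0" using assms by (smt (verit) mult_nonneg_nonneg)
  have G: "(1 + t) * (1 + k * t) ^ Suc (Suc j) \<noteq> 0" using p assms by simp
  show ?thesis
    apply (rule derivative_eq_intros refl)+
    using G apply simp
    using p assms unfolding qq_def apply (simp add: power2_eq_square power_Suc field_simps)
    done
qed

lemma g_mono:
  fixes k u b :: real
  assumes "0 \<le> u" "u \<le> b" "0 < b" "0 \<le> k" "qq j k b \<ge> 0"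
  shows "u ^ Suc j / ((1 + u) * (1 + k * u) ^ Suc (Suc j)) \<le> b ^ Suc j / ((1 + b) * (1 + k * b) ^ Suc (Suc j))"
proof (rule deriv_nonneg_imp_mono[where g = "\<lambda>t. t ^ Suc j / ((1 + t) * (1 + k * t) ^ Suc (Suc j))"])
  fix x assume x: "x \<in> {u..b}"
  then show "((\<lambda>t. t ^ Suc j / ((1 + t) * (1 + k * t) ^ Suc (Suc j))) has_real_derivative
     (x ^ j * (1 + k * x) ^ Suc j * qq j k x / ((1 + x) * (1 + k * x) ^ Suc (Suc j))^2)) (at x)"
    using assms by (intro g_deriv) auto
  have "qq j k x \<ge> 0" using x assms by (intro qq_nonneg[of x b]) auto
  moreover have "1 + k * x \<ge> 0" using x assms by (smt (verit) atLeastAtMost_iff mult_nonneg_nonneg)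
  ultimately show "x ^ j * (1 + k * x) ^ Suc j * qq j k x / ((1 + x) * (1 + k * x) ^ Suc (Suc j))^2 \<ge> 0"
    using x assms by simp
qed (use assms in auto)


lemma Du3_le:
  fixes u v w b c :: real
  assumes "0 \<le> u" "u \<le> b" "0 < b" "0 \<le> v" "v \<le> c" "0 \<le> w" "w \<le> c" "qq j (1 + c) b \<ge> 0"
  shows "\<bar>real (Suc (Suc j)) * u ^ Suc j * (1 + v + v * w) ^ Suc (Suc j) / (1 + u + u * v) ^ Suc (Suc (Suc j))\<bar>
     \<le> real (Suc (Suc j)) * b ^ Suc j * (1 + c + c^2) ^ Suc (Suc j) / ((1 + b) * (1 + b + b * c) ^ Suc (Suc j))"
proof -
  define N where "N = 1 + v + v * w"
  define D where "D = 1 + u + u * v"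
  define C where "C = 1 + c + c^2"
  define M where "M = 1 + v + v * c"
  define Eu where "Eu = 1 + u + u * c"
  have c0: "c \<ge> 0" using assms by simp
  have N: "N \<ge> 1" unfolding N_def using assms by (simp add: mult_nonneg_nonneg)
  have D: "D \<ge> 1 + u" unfolding D_def using assms by (simp add: mult_nonneg_nonneg)
  have D0: "D > 0" using D assms by simp
  have C0: "C > 0" unfolding C_def using c0 by (smt (verit) zero_le_power2)
  have Eu: "Eu > 0" unfolding Eu_def using assms c0 by (smt (verit) mult_nonneg_nonneg)
  have eq: "real (Suc (Suc j)) * u ^ Suc j * N ^ Suc (Suc j) / D ^ Suc (Suc (Suc j))
      = real (Suc (Suc j)) * (N / D) ^ Suc (Suc j) * (u ^ Suc j / D)"
    using D0 by (simp add: field_simps power_Suc)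
  have r1: "N / D \<le> C / Eu"
  proof -
    have NM: "N \<le> M" unfolding N_def M_def using assms by (simp add: mult_left_mono)
    have "M * Eu \<le> C * D"
    proof -
      have "C * D - M * Eu = (c - v) * (1 + c + c * u)" unfolding D_def C_def M_def Eu_def
        by (simp add: algebra_simps power2_eq_square)
      moreover have "(c - v) * (1 + c + c * u) \<ge> 0" using assms c0 by (simp add: mult_nonneg_nonneg)
      ultimately show ?thesis by simp
    qed
    then have "M / D \<le> C / Eu" using D0 Eu by (simp add: field_simps)
    moreover have "N / D \<le> M / D" using NM D0 by (simp add: divide_right_mono)
    ultimately show ?thesis by simp
  qed
  have r2: "u ^ Suc j / D \<le> u ^ Suc j / (1 + u)"
    using D assms by (intro divide_left_mono) auto
  have p0: "N / D \<ge> 0" using N D0 by simp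
  have "(N / D) ^ Suc (Suc j) \<le> (C / Eu) ^ Suc (Suc j)" using r1 p0 by (rule power_mono)
  then have "(N / D) ^ Suc (Suc j) * (u ^ Suc j / D) \<le> (C / Eu) ^ Suc (Suc j) * (u ^ Suc j / (1 + u))"
    using r2 p0 assms D0 C0 Eu by (intro mult_mono) auto
  also have "\<dots> = C ^ Suc (Suc j) * (u ^ Suc j / ((1 + u) * (1 + (1 + c) * u) ^ Suc (Suc j)))"
    unfolding Eu_def by (simp add: power_divide algebra_simps)
  also have "\<dots> \<le> C ^ Suc (Suc j) * (b ^ Suc j / ((1 + b) * (1 + (1 + c) * b) ^ Suc (Suc j)))"
    using assms c0 by (intro mult_left_mono g_mono) (auto simp: C_def)
  finally have "real (Suc (Suc j)) * ((N / D) ^ Suc (Suc j) * (u ^ Suc j / D))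
     \<le> real (Suc (Suc j)) * (C ^ Suc (Suc j) * (b ^ Suc j / ((1 + b) * (1 + (1 + c) * b) ^ Suc (Suc j))))"
    by (rule mult_left_mono) simp
  also have "\<dots> = real (Suc (Suc j)) * b ^ Suc j * C ^ Suc (Suc j) / ((1 + b) * (1 + b + b * c) ^ Suc (Suc j))"
    by (simp add: algebra_simps)
  finally have fin: "real (Suc (Suc j)) * u ^ Suc j * N ^ Suc (Suc j) / D ^ Suc (Suc (Suc j))
     \<le> real (Suc (Suc j)) * b ^ Suc j * C ^ Suc (Suc j) / ((1 + b) * (1 + b + b * c) ^ Suc (Suc j))"
    using eq by (simp add: mult.assoc)
  have "real (Suc (Suc j)) * u ^ Suc j * N ^ Suc (Suc j) / D ^ Suc (Suc (Suc j)) \<ge> 0"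
    using assms N D0 by simp
  then show ?thesis using fin unfolding N_def[symmetric] D_def[symmetric] C_def[symmetric]
    by (metis abs_of_nonneg)
qed



lemma Du2_le:
  fixes u v w c :: real
  assumes "0 \<le> u" "0 \<le> v" "v \<le> c" "0 \<le> w" "w \<le> c"
  shows "\<bar>real (Suc 1) * u ^ 1 * (1 + v + v * w) ^ Suc 1 / (1 + u + u * v) ^ Suc (Suc 1)\<bar>
     \<le> 8 * (1 + c + c^2) ^ 2 / (27 * (1 + c))"
proof -
  define N where "N = 1 + v + v * w"
  define D where "D = 1 + u + u * v"
  define C where "C = 1 + c + c^2"
  define M where "M = 1 + v + v * c"
  define k where "k = 1 + v"
  have c0: "c \<ge> 0" using assms by simp
  have N: "N \<ge> 1" unfolding N_def using assms by (simp add: mult_nonneg_nonneg)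
  have NM: "N \<le> M" unfolding N_def M_def using assms by (simp add: mult_left_mono)
  have Dk: "D = 1 + k * u" unfolding D_def k_def by (simp add: algebra_simps)
  have k: "k \<ge> 1" unfolding k_def using assms by simp
  have D0: "D > 0" using Dk k assms by (smt (verit) mult_nonneg_nonneg)
  have ku: "k * u \<ge> 0" using k assms by simp
  have r1: "u / D ^ 3 \<le> 4 / (27 * k)"
  proof -
    have "4 * D ^ 3 - 27 * (k * u) = (2 * (k * u) - 1)^2 * (k * u + 4)"
      unfolding Dk by (simp add: algebra_simps power2_eq_square power3_eq_cube)
    moreover have "(2 * (k * u) - 1)^2 * (k * u + 4) \<ge> 0" using ku by simp
    ultimately have "27 * k * u \<le> 4 * D ^ 3" by (simp add: mult.assoc)
    then show ?thesis using D0 k by (simp add: field_simps)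
  qed
  have r2: "M^2 / k \<le> C^2 / (1 + c)"
  proof -
    have "C^2 * k - M^2 * (1 + c) = (c - v) * (1 + 2 * c + (1 + c) ^ 2 * c + (1 + c) ^ 2 * (1 + c) * v)"
      unfolding C_def M_def k_def by (simp add: algebra_simps power2_eq_square)
    moreover have "(c - v) * (1 + 2 * c + (1 + c) ^ 2 * c + (1 + c) ^ 2 * (1 + c) * v) \<ge> 0"
      using assms c0 by (intro mult_nonneg_nonneg) auto
    ultimately have "M^2 * (1 + c) \<le> C^2 * k" by simp
    then show ?thesis using k c0 by (simp add: field_simps)
  qed
  have "2 * u * N^2 / D^3 = 2 * N^2 * (u / D^3)" by simp
  also have "\<dots> \<le> 2 * M^2 * (4 / (27 * k))"
    using r1 NM N assms D0 by (intro mult_mono power_mono) auto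
  also have "\<dots> = 8 / 27 * (M^2 / k)" by simp
  also have "\<dots> \<le> 8 / 27 * (C^2 / (1 + c))" using r2 by (rule mult_left_mono) simp
  also have "\<dots> = 8 * C^2 / (27 * (1 + c))" by simp
  finally have fin: "2 * u * N^2 / D^3 \<le> 8 * C^2 / (27 * (1 + c))" .
  have "2 * u * N^2 / D^3 \<ge> 0" using assms D0 by simp
  then show ?thesis using fin unfolding N_def[symmetric] D_def[symmetric] C_def[symmetric]
    by (simp add: numeral_eq_Suc)
qed


theorem lemma2p12:
  fixes d :: nat and a b c :: real and x :: "nat \<Rightarrow> real"
  assumes "2 \<le> d" "d \<le> 7"
    and "params d = (a, b, c)"
    and "x \<in> SS a b c"
  shows "\<forall>n\<ge>2.
     (d = 2 \<longrightarrow>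
        \<bar>deriv (\<lambda>t. psi d t (x n) (x (n+1))) (x (n-1))\<bar>
          \<le> 4 * d * (d - 1) ^ (d - 1) * (1 + c + c^2) ^ d
             / ((d + 1) ^ (d + 1) * (1 + c) ^ (d - 1))) \<and>
     (3 \<le> d \<longrightarrow>
        \<bar>deriv (\<lambda>t. psi d t (x n) (x (n+1))) (x (n-1))\<bar>
          \<le> d * b ^ (d - 1) * (1 + c + c^2) ^ d / ((1 + b) * (1 + b + b * c) ^ d)) \<and>
     \<bar>deriv (\<lambda>t. psi d (x (n-1)) t (x (n+1))) (x n)\<bar>
        \<le> \<bar>deriv (\<lambda>t. psi d t (x n) (x (n+1))) (x (n-1))\<bar> * (b * (1 + c + b * c)) \<and>
     \<bar>deriv (\<lambda>t. psi d (x (n-1)) (x n) t) (x (n+1))\<bar>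
        \<le> d * b ^ d * c * (1 + c + c^2) ^ (d - 1) / (1 + b + b * c) ^ d"
proof (intro allI impI)
  fix n :: nat assume n: "2 \<le> n"
  have x1: "a \<le> x 1" "x 1 \<le> b" and xn: "\<And>i. i \<ge> 2 \<Longrightarrow> 0 \<le> x i \<and> x i \<le> c"
    using assms(4) unfolding SS_def by auto
  have dcases: "d = 2 \<or> d = 3 \<or> d = 4 \<or> d = 5 \<or> d = 6 \<or> d = 7" using assms(1,2) by arith
  have pr: "0 < a \<and> a \<le> b \<and> c \<le> b \<and> 0 \<le> c"
    using dcases
  proof (elim disjE)
  qed (use assms(3) in \<open>simp_all add: params_def\<close>)
  define u where "u = x (n - 1)"
  define v where "v = x n"
  define w where "w = x (n + 1)"
  have v: "0 \<le> v" "v \<le> c" using xn[of n] n unfolding v_def by auto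
  have w: "0 \<le> w" "w \<le> c" using xn[of "n+1"] n unfolding w_def by auto
  have u': "0 \<le> u \<and> u \<le> b"
  proof (cases "n = 2")
    case True
    then show ?thesis using x1 pr unfolding u_def by auto
  next
    case False
    then have "n - 1 \<ge> 2" using n by arith
    then show ?thesis using xn[of "n - 1"] pr unfolding u_def by auto
  qed
  then have u: "0 \<le> u" "u \<le> b" by auto
  have b0: "0 < b" using pr by simp
  obtain m where m: "d = Suc m" "m \<ge> 1" using assms(1) by (cases d) auto
  have Du: "deriv (\<lambda>t. psi d t v w) u = real (Suc m) * u ^ m * (1 + v + v * w) ^ Suc m / (1 + u + u * v) ^ Suc (Suc m)"
    unfolding m(1) by (rule DERIV_imp_deriv[OF du]) (use u v in auto)
  have Dv: "deriv (\<lambda>t. psi d u t w) v = real (Suc m) * u ^ Suc m * (1 + v + v * w) ^ m * (1 + w + u * w) / (1 + u + u * v) ^ Suc (Suc m)"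
    unfolding m(1) by (rule DERIV_imp_deriv[OF dv]) (use u v in auto)
  have Dw: "deriv (\<lambda>t. psi d u v t) w = real (Suc m) * u ^ Suc m * (1 + v + v * w) ^ m * v / (1 + u + u * v) ^ Suc m"
    unfolding m(1) by (rule DERIV_imp_deriv[OF dw]) (use u v in auto)
  have n1: "n - 1 = n - 1" ..
  show "(d = 2 \<longrightarrow>
        \<bar>deriv (\<lambda>t. psi d t (x n) (x (n+1))) (x (n-1))\<bar>
          \<le> 4 * d * (d - 1) ^ (d - 1) * (1 + c + c^2) ^ d
             / ((d + 1) ^ (d + 1) * (1 + c) ^ (d - 1))) \<and>
     (3 \<le> d \<longrightarrow>
        \<bar>deriv (\<lambda>t. psi d t (x n) (x (n+1))) (x (n-1))\<bar>
          \<le> d * b ^ (d - 1) * (1 + c + c^2) ^ d / ((1 + b) * (1 + b + b * c) ^ d)) \<and>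
     \<bar>deriv (\<lambda>t. psi d (x (n-1)) t (x (n+1))) (x n)\<bar>
        \<le> \<bar>deriv (\<lambda>t. psi d t (x n) (x (n+1))) (x (n-1))\<bar> * (b * (1 + c + b * c)) \<and>
     \<bar>deriv (\<lambda>t. psi d (x (n-1)) (x n) t) (x (n+1))\<bar>
        \<le> d * b ^ d * c * (1 + c + c^2) ^ (d - 1) / (1 + b + b * c) ^ d"
    unfolding u_def[symmetric] v_def[symmetric] w_def[symmetric]
  proof (intro conjI impI)
    assume d2: "d = 2"
    then have m1: "m = 1" using m by simp
    have "\<bar>deriv (\<lambda>t. psi d t v w) u\<bar> \<le> 8 * (1 + c + c^2) ^ 2 / (27 * (1 + c))"
      unfolding Du m1 by (rule Du2_le) (use u v w in auto)
    then show "\<bar>deriv (\<lambda>t. psi d t v w) u\<bar> \<le> 4 * d * (d - 1) ^ (d - 1) * (1 + c + c^2) ^ d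
             / ((d + 1) ^ (d + 1) * (1 + c) ^ (d - 1))"
      using d2 by simp
  next
    assume d3: "3 \<le> d"
    then obtain j where j: "m = Suc j" using m by (cases m) auto
    have jd: "j = d - 2" using m j by simp
    have bc: "b = fst (snd (params d))" "c = snd (snd (params d))" using assms(3) by simp_all
    have q: "qq j (1 + c) b \<ge> 0"
      unfolding bc jd using dcases d3
    proof (elim disjE)
    qed (simp_all add: params_def qq_def)
    have "\<bar>deriv (\<lambda>t. psi d t v w) u\<bar> \<le> real (Suc (Suc j)) * b ^ Suc j * (1 + c + c^2) ^ Suc (Suc j) / ((1 + b) * (1 + b + b * c) ^ Suc (Suc j))"
      unfolding Du j by (rule Du3_le) (use u v w b0 q in auto)
    then show "\<bar>deriv (\<lambda>t. psi d t v w) u\<bar> \<le> d * b ^ (d - 1) * (1 + c + c^2) ^ d / ((1 + b) * (1 + b + b * c) ^ d)"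
      using m j by simp
  next
    show "\<bar>deriv (\<lambda>t. psi d u t w) v\<bar> \<le> \<bar>deriv (\<lambda>t. psi d t v w) u\<bar> * (b * (1 + c + b * c))"
      unfolding Du Dv by (rule Dv_le) (use u v w in auto)
  next
    have "\<bar>deriv (\<lambda>t. psi d u v t) w\<bar> \<le> real (Suc m) * b ^ Suc m * c * (1 + c + c^2) ^ m / (1 + b + b * c) ^ Suc m"
      unfolding Dw by (rule Dw_le) (use u v w in auto)
    then show "\<bar>deriv (\<lambda>t. psi d u v t) w\<bar> \<le> d * b ^ d * c * (1 + c + c^2) ^ (d - 1) / (1 + b + b * c) ^ d"
      using m by simp
  qed
qed

end
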